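(* Assume $\mathscr{R}_0>\frac{\sigma_m(\mu+r)C_I}{\mu\beta}$ (equivalently $C_I<\frac{\beta A}{(\mu+r)(\mu+\beta+\rho)}$) and $$\frac{\beta^2\sigma_s}{(\mu+r)\sigma_m^2}\le C_I.$$ Then $E^*$ is the unique endemic equilibrium of (3) if $1<\mathscr{R}_0\le 1+\frac{\sigma_m(\mu+r)}{\mu\beta}C_I$, and $E_1^*$ is the unique endemic equilibrium of (3) if $\mathscr{R}_0>1+\frac{\sigma_m(\mu+r)}{\mu\beta}C_I$.
   Context: Let $A,\sigma_m,\sigma_s,\mu,\rho,\beta,r,C_I$ be positive constants. Write $[x]^+=\max\{0,x\}$ and $T(I_s)=rI_s$ if $I_s<C_I$, $T(I_s)=rC_I$ if $I_s\ge C_I$. System (3) is $$S'=A-\sigma_mSI_m-\sigma_sS[I_s-C_I]^+-\mu S,\quad I_m'=\sigma_mSI_m+\sigma_sS[I_s-C_I]^+-(\mu+\rho+\beta)I_m,\quad I_s'=\beta I_m-T(I_s)-\mu I_s.$$ $\mathscr{R}_0=\frac{A\sigma_m}{\mu(\mu+\beta+\rho)}$. An endemic equilibrium is an equilibrium of (3) with $S,I_m,I_s>0$. $E^*=(S^*,I_m^*,I_s^* )$ with $S^*=\frac{\mu+\beta+\rho}{\sigma_m}$, $I_m^*=\frac{\mu(\mathscr{R}_0-1)}{\sigma_m}$, $I_s^*=\frac{\mu\beta(\mathscr{R}_0-1)}{\sigma_m(\mu+r)}$. Let $p=\frac{(\mu+r)\sigma_m\sigma_sC_I}{\mu(\mu\sigma_m+\beta\sigma_s)}$,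 $q=\frac{\mu\sigma_m}{\mu\sigma_m+\beta\sigma_s}$, and $S_{1,2}^*=\frac{\mu+\beta+\rho}{2\sigma_m}\big\{\mathscr{R}_0-p+q\mp\sqrt{(\mathscr{R}_0-p-q)^2-4pq}\big\}$ (minus sign for $S_1^*$, plus for $S_2^*$), $I_{m_i}^*=\frac{\mu\mathscr{R}_0}{\sigma_m}-\frac{\mu S_i^*}{\mu+\beta+\rho}$, $I_{s_i}^*=\frac{\beta\mathscr{R}_0}{\sigma_m}-\frac{\beta S_i^*}{\mu+\beta+\rho}-\frac{rC_I}{\mu}$, $E_i^*=(S_i^*,I_{m_i}^*,I_{s_i}^* )$, $i=1,2$ (these are the candidate equilibria in the region $I_s>C_I$). "$E_i^*$ exists" / "$E_i^*$ is an endemic equilibrium" means $S_i^*$ is real, $S_i^*>0$, $I_{m_i}^*>0$ and $I_{s_i}^*>C_I$; "$E^*$ exists" means $E^*$ is an endemic equilibrium. *)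

theory Defs
  imports Complex_Main
begin

text \<open>Parameters in the order: A, sigma_m (sm), sigma_s (ss), mu, rho, beta, r, C_I (CI).\<close>

definition pos_part :: "real \<Rightarrow> real" where
  "pos_part x = max 0 x"

definition Tfun :: "real \<Rightarrow> real \<Rightarrow> real \<Rightarrow> real" where
  "Tfun r CI Isv = (if Isv < CI then r * Isv else r * CI)"

definition rhs :: "real \<Rightarrow> real \<Rightarrow> real \<Rightarrow> real \<Rightarrow> real \<Rightarrow> real \<Rightarrow> real \<Rightarrow> real
    \<Rightarrow> real \<times> real \<times> real \<Rightarrow> real \<times> real \<times> real" where
  "rhs A sm ss mu rho beta r CI E = (case E of (S, Imv, Isv) \<Rightarrow>
     (A - sm * S * Imv - ss * S * pos_part (Isv - CI) - mu * S,
      sm * S * Imv + ss * S * pos_part (Isv - CI) - (mu + rho + beta) * Imv,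
      beta * Imv - Tfun r CI Isv - mu * Isv))"

definition is_equilibrium :: "real \<Rightarrow> real \<Rightarrow> real \<Rightarrow> real \<Rightarrow> real \<Rightarrow> real \<Rightarrow> real \<Rightarrow> real
    \<Rightarrow> real \<times> real \<times> real \<Rightarrow> bool" where
  "is_equilibrium A sm ss mu rho beta r CI E \<longleftrightarrow> rhs A sm ss mu rho beta r CI E = (0, 0, 0)"

definition is_endemic_eq :: "real \<Rightarrow> real \<Rightarrow> real \<Rightarrow> real \<Rightarrow> real \<Rightarrow> real \<Rightarrow> real \<Rightarrow> real
    \<Rightarrow> real \<times> real \<times> real \<Rightarrow> bool" where
  "is_endemic_eq A sm ss mu rho beta r CI E \<longleftrightarrow>
     is_equilibrium A sm ss mu rho beta r CI E \<and>
     (case E of (S, Imv, Isv) \<Rightarrow> S > 0 \<and> Imv > 0 \<and> Isv > 0)"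

definition R0 :: "real \<Rightarrow> real \<Rightarrow> real \<Rightarrow> real \<Rightarrow> real \<Rightarrow> real" where
  "R0 A sm mu rho beta = A * sm / (mu * (mu + beta + rho))"

definition Estar :: "real \<Rightarrow> real \<Rightarrow> real \<Rightarrow> real \<Rightarrow> real \<Rightarrow> real \<Rightarrow> real \<times> real \<times> real" where
  "Estar A sm mu rho beta r =
     (let R = R0 A sm mu rho beta in
      ((mu + beta + rho) / sm,
       mu * (R - 1) / sm,
       mu * beta * (R - 1) / (sm * (mu + r))))"

definition p_par :: "real \<Rightarrow> real \<Rightarrow> real \<Rightarrow> real \<Rightarrow> real \<Rightarrow> real \<Rightarrow> real" where
  "p_par sm ss mu beta r CI = (mu + r) * sm * ss * CI / (mu * (mu * sm + beta * ss))"

definition q_par :: "real \<Rightarrow> real \<Rightarrow> real \<Rightarrow> real \<Rightarrow> real" where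
  "q_par sm ss mu beta = mu * sm / (mu * sm + beta * ss)"

definition disc :: "real \<Rightarrow> real \<Rightarrow> real \<Rightarrow> real \<Rightarrow> real \<Rightarrow> real \<Rightarrow> real \<Rightarrow> real \<Rightarrow> real" where
  "disc A sm ss mu rho beta r CI =
     (let R = R0 A sm mu rho beta; p = p_par sm ss mu beta r CI; q = q_par sm ss mu beta
      in (R - p - q)^2 - 4 * p * q)"

definition S1 :: "real \<Rightarrow> real \<Rightarrow> real \<Rightarrow> real \<Rightarrow> real \<Rightarrow> real \<Rightarrow> real \<Rightarrow> real \<Rightarrow> real" where
  "S1 A sm ss mu rho beta r CI =
     (let R = R0 A sm mu rho beta; p = p_par sm ss mu beta r CI; q = q_par sm ss mu beta
      in (mu + beta + rho) / (2 * sm) * (R - p + q - sqrt (disc A sm ss mu rho beta r CI)))"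

definition E1 :: "real \<Rightarrow> real \<Rightarrow> real \<Rightarrow> real \<Rightarrow> real \<Rightarrow> real \<Rightarrow> real \<Rightarrow> real \<Rightarrow> real \<times> real \<times> real" where
  "E1 A sm ss mu rho beta r CI =
     (let R = R0 A sm mu rho beta; S = S1 A sm ss mu rho beta r CI
      in (S,
          mu * R / sm - mu * S / (mu + beta + rho),
          beta * R / sm - beta * S / (mu + beta + rho) - r * CI / mu))"

end

theory Submission
  imports Defs
begin

lemma eq2_ident:
  fixes sm ss mu beta r CI D R x :: real
  assumes "sm > 0" "ss>0" "mu>0" "beta>0" "D>0"
  defines "K \<equiv> mu*sm+beta*ss"
  defines "p \<equiv> (mu + r) * sm * ss * CI / (mu * (mu * sm + beta * ss))"
  defines "q \<equiv> mu * sm / (mu * sm + beta * ss)"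
  shows "sm * (D*x/sm) * (mu*(R-x)/sm) + ss * (D*x/sm) * ((beta*(R-x)/sm - r*CI/mu) - CI) - D * (mu*(R-x)/sm)
     = -(D*K/sm^2) * (x^2 - (R - p + q)*x + q*R)"
proof -
  have K: "K > 0" unfolding K_def using assms by (simp add: add_pos_pos)
  show ?thesis unfolding p_def q_def using K assms unfolding K_def[symmetric]
    by (simp add: field_simps) (simp add: K_def algebra_simps power2_eq_square)
qed

lemma fRc:
  fixes c q R :: real
  shows "(R-c)^2 - (R-c*(1-q)+q)*(R-c) + q*R = c*q*(1-(R-c))"
  by (simp add: algebra_simps power2_eq_square)

theorem theorem2p1:
  fixes A sm ss mu rho beta r CI :: real
  assumes pos: "A > 0" "sm > 0" "ss > 0" "mu > 0" "rho > 0" "beta > 0" "r > 0" "CI > 0"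
    and hR0: "R0 A sm mu rho beta > sm * (mu + r) * CI / (mu * beta)"
    and hCI: "beta^2 * ss / ((mu + r) * sm^2) \<le> CI"
  shows "(1 < R0 A sm mu rho beta \<and> R0 A sm mu rho beta \<le> 1 + sm * (mu + r) / (mu * beta) * CI \<longrightarrow>
           (\<forall>E. is_endemic_eq A sm ss mu rho beta r CI E \<longleftrightarrow> E = Estar A sm mu rho beta r)) \<and>
         (R0 A sm mu rho beta > 1 + sm * (mu + r) / (mu * beta) * CI \<longrightarrow>
           disc A sm ss mu rho beta r CI \<ge> 0 \<and>
           (\<forall>E. is_endemic_eq A sm ss mu rho beta r CI E \<longleftrightarrow> E = E1 A sm ss mu rho beta r CI))"
proof -
  define D where "D = mu+beta+rho"
  define R where "R = R0 A sm mu rho beta"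
  define K where "K = mu*sm+beta*ss"
  define p where "p = p_par sm ss mu beta r CI"
  define q where "q = q_par sm ss mu beta"
  define c where "c = sm*(mu+r)*CI/(mu*beta)"
  define b where "b = R - p + q"
  define f where "f = (\<lambda>x::real. x^2 - b*x + q*R)"
  have D: "D > 0" using pos unfolding D_def by simp
  have K: "K > 0" using pos unfolding K_def by (simp add: add_pos_pos)
  have RD: "R = A*sm/(mu*D)" unfolding R_def R0_def D_def by simp
  have A_eq: "A = R*mu*D/sm" using pos D unfolding RD by (simp add: field_simps)
  have q0: "0 < q" using pos K unfolding q_def q_par_def K_def[symmetric] by simp
  have q1: "q < 1" using pos K unfolding q_def q_par_def K_def[symmetric] by (simp add: K_def)
  have c0: "c > 0" using pos unfolding c_def by simp
  have pc: "p = c*(1-q)"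
    using pos K unfolding p_def q_def c_def p_par_def q_par_def K_def[symmetric]
    by (simp add: field_simps) (simp add: K_def algebra_simps)
  have c1: "sm * (mu + r) / (mu * beta) * CI = c" unfolding c_def by simp
  have hRc: "R > c" using hR0 unfolding R_def c_def .
  have discb: "disc A sm ss mu rho beta r CI = b^2 - 4*q*R"
    unfolding disc_def b_def Let_def R_def p_def q_def by (simp add: algebra_simps power2_eq_square)
  have ffRc: "f (R-c) = c*q*(1-(R-c))" unfolding f_def b_def pc using fRc by simp
  have f0: "f 0 = q*R" unfolding f_def by simp
  have R0: "R > 0" using hRc c0 by simp
  have hC2: "beta^2*ss \<le> CI*((mu+r)*sm^2)" using hCI pos by (simp add: pos_divide_le_eq)
  have cq: "c*q - (1-q) = (CI*((mu+r)*sm^2) - beta^2*ss)/(beta*K)"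
    using pos K unfolding c_def q_def q_par_def K_def[symmetric]
    by (simp add: field_simps) (simp add: K_def algebra_simps power2_eq_square)
  have vert: "1 + c \<le> c*(1+q) + q"
  proof -
    have "(CI*((mu+r)*sm^2) - beta^2*ss)/(beta*K) \<ge> 0" using hC2 pos K by simp
    moreover have "c*(1+q) = c + c*q" by (simp add: algebra_simps)
    ultimately show ?thesis using cq by linarith
  qed
  have endem: "\<And>S Im Is. is_endemic_eq A sm ss mu rho beta r CI (S,Im,Is) \<longleftrightarrow>
      S > 0 \<and> Im > 0 \<and> Is > 0 \<and>
      A - sm * S * Im - ss * S * pos_part (Is - CI) - mu * S = 0 \<and>
      sm * S * Im + ss * S * pos_part (Is - CI) - D * Im = 0 \<and>
      beta * Im - Tfun r CI Is - mu * Is = 0"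
    unfolding is_endemic_eq_def is_equilibrium_def rhs_def D_def
    by (auto simp: algebra_simps)
  have low: "\<And>S Im Is. Is \<le> CI \<Longrightarrow> is_endemic_eq A sm ss mu rho beta r CI (S,Im,Is) \<longleftrightarrow>
      R > 1 \<and> S = D/sm \<and> Im = mu*(R-1)/sm \<and> Is = beta*Im/(mu+r)"
  proof -
    fix S Im Is assume le: "Is \<le> CI"
    have pp: "pos_part (Is - CI) = 0" using le unfolding pos_part_def by simp
    have tt: "Tfun r CI Is = r * Is" using le unfolding Tfun_def by auto
    show "is_endemic_eq A sm ss mu rho beta r CI (S,Im,Is) \<longleftrightarrow>
      R > 1 \<and> S = D/sm \<and> Im = mu*(R-1)/sm \<and> Is = beta*Im/(mu+r)"
      unfolding endem pp tt
    proof
      assume H: "0 < S \<and> 0 < Im \<and> 0 < Is \<and> A - sm * S * Im - ss * S * 0 - mu * S = 0 \<and>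
        sm * S * Im + ss * S * 0 - D * Im = 0 \<and> beta * Im - r * Is - mu * Is = 0"
      have "sm*S - D = 0" using H by (auto simp: algebra_simps)
      hence S: "S = D/sm" using pos by (simp add: field_simps)
      have "A - D*Im - mu*S = 0" using H S pos by simp
      moreover have "R*mu - sm*Im - mu = (A - D*Im - mu*S)*sm/D" using S pos D unfolding A_eq by (simp add: field_simps)
      ultimately have "R*mu - sm*Im - mu = 0" by simp
      hence Im: "Im = mu*(R-1)/sm" using pos by (simp add: field_simps)
      have Is: "Is = beta*Im/(mu+r)" using H pos by (simp add: field_simps algebra_simps)
      have "R > 1" using H Im pos by (simp add: field_simps)
      thus "R > 1 \<and> S = D/sm \<and> Im = mu*(R-1)/sm \<and> Is = beta*Im/(mu+r)" using S Im Is by simp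
    next
      assume H: "R > 1 \<and> S = D/sm \<and> Im = mu*(R-1)/sm \<and> Is = beta*Im/(mu+r)"
      hence S: "S = D/sm" and Im: "Im = mu*(R-1)/sm" and Is: "Is = beta*Im/(mu+r)" and R1: "R > 1" by auto
      have i1: "0 < S" using S D pos by simp
      have i2: "0 < Im" using Im R1 pos by simp
      have i3: "0 < Is" using Is i2 pos by simp
      have i4: "A - sm * S * Im - ss * S * 0 - mu * S = 0" unfolding A_eq S Im using pos
        by (simp add: field_simps)
      have i5: "sm * S * Im + ss * S * 0 - D * Im = 0" unfolding S using pos by simp
      have i6: "beta * Im - r * Is - mu * Is = 0" unfolding Is using pos by (simp add: field_simps)
      show "0 < S \<and> 0 < Im \<and> 0 < Is \<and> A - sm * S * Im - ss * S * 0 - mu * S = 0 \<and>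
        sm * S * Im + ss * S * 0 - D * Im = 0 \<and> beta * Im - r * Is - mu * Is = 0"
        using i1 i2 i3 i4 i5 i6 by blast
    qed
  qed
  have hi: "\<And>S Im Is. Is > CI \<Longrightarrow> is_endemic_eq A sm ss mu rho beta r CI (S,Im,Is) \<longleftrightarrow>
      (\<exists>x. 0 < x \<and> x < R - c \<and> f x = 0 \<and> S = D*x/sm \<and> Im = mu*(R-x)/sm \<and>
         Is = beta*(R-x)/sm - r*CI/mu)"
  proof -
    fix S Im Is assume gt: "Is > CI"
    have pp: "pos_part (Is - CI) = Is - CI" using gt unfolding pos_part_def by simp
    have tt: "Tfun r CI Is = r * CI" using gt unfolding Tfun_def by auto
    have ident: "\<And>x. sm * (D*x/sm) * (mu*(R-x)/sm) + ss * (D*x/sm) * ((beta*(R-x)/sm - r*CI/mu) - CI) - D * (mu*(R-x)/sm)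
       = -(D*K/sm^2) * f x"
      unfolding f_def b_def p_def q_def p_par_def q_par_def K_def
      by (rule eq2_ident) (use pos D in auto)
    have IsCI: "\<And>x. (beta*(R-x)/sm - r*CI/mu) - CI = (beta/sm) * (R - c - x)"
      unfolding c_def using pos by (simp add: field_simps)
    show "is_endemic_eq A sm ss mu rho beta r CI (S,Im,Is) \<longleftrightarrow>
      (\<exists>x. 0 < x \<and> x < R - c \<and> f x = 0 \<and> S = D*x/sm \<and> Im = mu*(R-x)/sm \<and>
         Is = beta*(R-x)/sm - r*CI/mu)"
      unfolding endem pp tt
    proof
      assume H: "0 < S \<and> 0 < Im \<and> 0 < Is \<and> A - sm * S * Im - ss * S * (Is - CI) - mu * S = 0 \<and>
        sm * S * Im + ss * S * (Is - CI) - D * Im = 0 \<and> beta * Im - r * CI - mu * Is = 0"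
      define x where "x = S*sm/D"
      have S: "S = D*x/sm" unfolding x_def using pos D by simp
      have x0: "0 < x" unfolding x_def using H pos D by simp
      have "A - mu*S - D*Im = 0" using H by linarith
      moreover have "mu*R - mu*x - sm*Im = (A - mu*S - D*Im)*sm/D" using S pos D unfolding A_eq
        by (simp add: field_simps)
      ultimately have "mu*R - mu*x - sm*Im = 0" by simp
      hence Im: "Im = mu*(R-x)/sm" using pos by (simp add: field_simps)
      have "Is = (beta*Im - r*CI)/mu" using H pos by (simp add: field_simps)
      hence Is: "Is = beta*(R-x)/sm - r*CI/mu" unfolding Im using pos by (simp add: field_simps)
      have "-(D*K/sm^2) * f x = 0" using H unfolding ident[symmetric] S[symmetric] Im[symmetric] Is[symmetric]
        by simp
      hence fx: "f x = 0" using D K pos by simp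
      have "(beta/sm) * (R - c - x) > 0" using gt unfolding IsCI[symmetric] Is[symmetric] by simp
      moreover have "beta/sm > 0" using pos by simp
      ultimately have "R - c - x > 0" using zero_less_mult_pos by blast
      thus "\<exists>x. 0 < x \<and> x < R - c \<and> f x = 0 \<and> S = D*x/sm \<and> Im = mu*(R-x)/sm \<and>
         Is = beta*(R-x)/sm - r*CI/mu" using x0 fx S Im Is by (intro exI[of _ x]) auto
    next
      assume "\<exists>x. 0 < x \<and> x < R - c \<and> f x = 0 \<and> S = D*x/sm \<and> Im = mu*(R-x)/sm \<and>
         Is = beta*(R-x)/sm - r*CI/mu"
      then obtain x where x0: "0 < x" and xR: "x < R - c" and fx: "f x = 0" and S: "S = D*x/sm"
        and Im: "Im = mu*(R-x)/sm" and Is: "Is = beta*(R-x)/sm - r*CI/mu" by blast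
      have i1: "0 < S" using S D pos x0 by simp
      have i2: "0 < Im" using Im xR c0 pos by simp
      have i3: "0 < Is" using gt pos by simp
      have i5: "sm * S * Im + ss * S * (Is - CI) - D * Im = 0" unfolding S Im Is ident fx by simp
      have sum: "A - mu*S - D*Im = 0" unfolding A_eq S Im using pos D by (simp add: field_simps)
      have i4: "A - sm * S * Im - ss * S * (Is - CI) - mu * S = 0" using sum i5 by linarith
      have i6: "beta * Im - r * CI - mu * Is = 0" unfolding Is Im using pos by (simp add: field_simps)
      show "0 < S \<and> 0 < Im \<and> 0 < Is \<and> A - sm * S * Im - ss * S * (Is - CI) - mu * S = 0 \<and>
        sm * S * Im + ss * S * (Is - CI) - D * Im = 0 \<and> beta * Im - r * CI - mu * Is = 0"
        using i1 i2 i3 i4 i5 i6 by blast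
    qed
  qed
  have IsCI: "\<And>x. (beta*(R-x)/sm - r*CI/mu) - CI = (beta/sm) * (R - c - x)"
    unfolding c_def using pos by (simp add: field_simps)
  have bsm: "beta/sm > 0" using pos by simp
  have Estar_eq: "Estar A sm mu rho beta r = (D/sm, mu*(R-1)/sm, beta*(mu*(R-1)/sm)/(mu+r))"
    unfolding Estar_def Let_def R_def[symmetric] D_def using pos by (simp add: field_simps)
  have IsStar: "beta*(mu*(R-1)/sm)/(mu+r) - CI = (mu*beta/(sm*(mu+r))) * (R - 1 - c)"
  proof -
    have mr: "mu + r \<noteq> 0" "sm \<noteq> 0" "mu \<noteq> 0" "beta \<noteq> 0" using pos by auto
    have gen: "\<And>u v w::real. u \<noteq> 0 \<Longrightarrow> v \<noteq> 0 \<Longrightarrow> v/u*(u*w/v) = w" by (simp add: field_simps)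
    have e1: "mu*beta/(sm*(mu+r)) * c = CI" unfolding c_def using mr gen[of "sm*(mu+r)" "mu*beta" CI] by simp
    have e2: "beta*(mu*(R-1)/sm)/(mu+r) = mu*beta/(sm*(mu+r)) * (R-1)" by (simp add: field_simps)
    show ?thesis unfolding e2 using e1 by (simp add: right_diff_distrib)
  qed
  have mbs: "mu*beta/(sm*(mu+r)) > 0" using pos by simp
  have part1: "1 < R \<and> R \<le> 1 + c \<longrightarrow>
      (\<forall>E. is_endemic_eq A sm ss mu rho beta r CI E \<longleftrightarrow> E = Estar A sm mu rho beta r)"
  proof (intro impI allI)
    assume C: "1 < R \<and> R \<le> 1 + c"
    have fpos: "f x > 0" if x0: "0 < x" and xR: "x < R - c" for x
    proof -
      have "f x - f (R-c) = (x - (R-c)) * (x + (R-c) - b)" unfolding f_def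
        by (simp add: algebra_simps power2_eq_square)
      moreover have "x + (R-c) - b < 0" unfolding b_def pc using xR C vert by (simp add: algebra_simps)
      moreover have "x - (R-c) < 0" using xR by simp
      ultimately have "f x - f (R-c) > 0" by (simp add: mult_neg_neg)
      moreover have "f (R-c) \<ge> 0" unfolding ffRc using c0 q0 C by simp
      ultimately show ?thesis by linarith
    qed
    have stle: "beta*(mu*(R-1)/sm)/(mu+r) \<le> CI"
    proof -
      have "R - 1 - c \<le> 0" using C by simp
      from mult_nonneg_nonpos[OF less_imp_le[OF mbs] this]
      have "(mu*beta/(sm*(mu+r))) * (R - 1 - c) \<le> 0" .
      thus ?thesis using IsStar by linarith
    qed
    fix E :: "real \<times> real \<times> real"
    obtain S Im Is where E: "E = (S,Im,Is)" by (cases E) auto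
    show "is_endemic_eq A sm ss mu rho beta r CI E \<longleftrightarrow> E = Estar A sm mu rho beta r"
    proof (cases "Is \<le> CI")
      case True
      show ?thesis unfolding E low[OF True] Estar_eq using C by auto
    next
      case False
      hence gt: "Is > CI" by simp
      have "\<not> is_endemic_eq A sm ss mu rho beta r CI (S,Im,Is)"
        unfolding hi[OF gt] using fpos by force
      moreover have "(S,Im,Is) \<noteq> Estar A sm mu rho beta r" unfolding Estar_eq using gt stle by auto
      ultimately show ?thesis unfolding E by simp
    qed
  qed
  have part2: "R > 1 + c \<longrightarrow> disc A sm ss mu rho beta r CI \<ge> 0 \<and>
      (\<forall>E. is_endemic_eq A sm ss mu rho beta r CI E \<longleftrightarrow> E = E1 A sm ss mu rho beta r CI)"
  proof (intro impI)
    assume C: "R > 1 + c"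
    define y where "y = R - c"
    have y0: "y > 0" unfolding y_def using hRc by simp
    have fy: "f y < 0" unfolding y_def ffRc using c0 q0 C by (simp add: mult_pos_neg)
    have dy: "disc A sm ss mu rho beta r CI = (2*y - b)^2 - 4 * f y" unfolding discb f_def
      by (simp add: algebra_simps power2_eq_square)
    have dpos: "disc A sm ss mu rho beta r CI > 0" using dy fy zero_le_power2[of "2*y-b"] by linarith
    define s where "s = sqrt (disc A sm ss mu rho beta r CI)"
    have s0: "s \<ge> 0" unfolding s_def using dpos by simp
    have s2: "s^2 = b^2 - 4*q*R" unfolding s_def using dpos discb by simp
    define x1 where "x1 = (b - s)/2"
    have "4*f x1 = s^2 - (b^2 - 4*q*R)" unfolding f_def x1_def by (simp add: field_simps power2_eq_square)
    hence fx1: "f x1 = 0" using s2 by simp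
    have lt2: "(2*y - b)^2 < s^2" using dy fy s2 discb by simp
    have yb1: "2*y - b > -s"
    proof (rule ccontr)
      assume "\<not> 2*y - b > -s"
      hence "s \<le> b - 2*y" by simp
      from power_mono[OF this s0, of 2] have "s^2 \<le> (b - 2*y)^2" .
      moreover have "(b - 2*y)^2 = (2*y - b)^2" by (simp add: power2_commute)
      ultimately show False using lt2 by linarith
    qed
    have yb2: "2*y - b < s"
    proof (rule ccontr)
      assume "\<not> 2*y - b < s"
      hence "s \<le> 2*y - b" by simp
      from power_mono[OF this s0, of 2] have "s^2 \<le> (2*y - b)^2" .
      thus False using lt2 by linarith
    qed
    have x1y: "x1 < y" unfolding x1_def using yb1 by simp
    have x2y: "(b+s)/2 > y" using yb2 by simp
    have "4*(x1 * ((b+s)/2)) = b^2 - s^2" unfolding x1_def by (simp add: field_simps power2_eq_square)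
    hence prod: "x1 * ((b+s)/2) = q*R" using s2 by simp
    have "q*R > 0" using q0 R0 by simp
    hence x10: "x1 > 0"
    proof -
      assume qR: "q*R > 0"
      show ?thesis
      proof (rule ccontr)
        assume "\<not> x1 > 0"
        hence "x1 \<le> 0" by simp
        moreover have "(b+s)/2 \<ge> 0" using x2y y0 by linarith
        ultimately have "x1 * ((b+s)/2) \<le> 0" by (rule mult_nonpos_nonneg)
        thus False using prod qR by linarith
      qed
    qed
    have S1eq: "S1 A sm ss mu rho beta r CI = D*x1/sm"
      unfolding S1_def Let_def R_def[symmetric] p_def[symmetric] q_def[symmetric] s_def[symmetric] D_def[symmetric]
        x1_def b_def using pos by (simp add: field_simps)
    have E1eq: "E1 A sm ss mu rho beta r CI = (D*x1/sm, mu*(R-x1)/sm, beta*(R-x1)/sm - r*CI/mu)"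
      unfolding E1_def Let_def R_def[symmetric] S1eq D_def[symmetric] using pos D by (simp add: field_simps)
    have IsStar_gt: "beta*(mu*(R-1)/sm)/(mu+r) > CI"
    proof -
      have "R - 1 - c > 0" using C by simp
      from mult_pos_pos[OF mbs this]
      have "(mu*beta/(sm*(mu+r))) * (R - 1 - c) > 0" .
      thus ?thesis using IsStar by linarith
    qed
    have Is1_gt: "beta*(R-x1)/sm - r*CI/mu > CI"
    proof -
      have "R - c - x1 > 0" using x1y unfolding y_def by simp
      from mult_pos_pos[OF bsm this]
      have "(beta/sm) * (R - c - x1) > 0" .
      thus ?thesis using IsCI[of x1] by linarith
    qed
    have uniq: "x = x1" if x0: "0 < x" and xR: "x < R - c" and fx: "f x = 0" for x
    proof -
      have "(2*x - b)^2 = s^2" using fx s2 unfolding f_def by (simp add: algebra_simps power2_eq_square)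
      hence "2*x - b = s \<or> 2*x - b = -s" by (simp add: power2_eq_iff)
      moreover have "2*x - b \<noteq> s" using xR x2y unfolding y_def by auto
      ultimately show ?thesis unfolding x1_def by auto
    qed
    show "disc A sm ss mu rho beta r CI \<ge> 0 \<and>
      (\<forall>E. is_endemic_eq A sm ss mu rho beta r CI E \<longleftrightarrow> E = E1 A sm ss mu rho beta r CI)"
    proof (intro conjI allI)
      show "disc A sm ss mu rho beta r CI \<ge> 0" using dpos by simp
      fix E :: "real \<times> real \<times> real"
      obtain S Im Is where E: "E = (S,Im,Is)" by (cases E) auto
      show "is_endemic_eq A sm ss mu rho beta r CI E \<longleftrightarrow> E = E1 A sm ss mu rho beta r CI"
      proof (cases "Is \<le> CI")
        case True
        have "\<not> is_endemic_eq A sm ss mu rho beta r CI (S,Im,Is)"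
          unfolding low[OF True] using True IsStar_gt by auto
        moreover have "(S,Im,Is) \<noteq> E1 A sm ss mu rho beta r CI" unfolding E1eq using True Is1_gt by auto
        ultimately show ?thesis unfolding E by simp
      next
        case False
        hence gt: "Is > CI" by simp
        show ?thesis unfolding E hi[OF gt] E1eq
        proof
          assume "\<exists>x. 0 < x \<and> x < R - c \<and> f x = 0 \<and> S = D*x/sm \<and> Im = mu*(R-x)/sm \<and>
            Is = beta*(R-x)/sm - r*CI/mu"
          then obtain x where "0 < x \<and> x < R - c \<and> f x = 0 \<and> S = D*x/sm \<and> Im = mu*(R-x)/sm \<and>
            Is = beta*(R-x)/sm - r*CI/mu" by blast
          moreover hence "x = x1" using uniq by blast
          ultimately show "(S, Im, Is) = (D*x1/sm, mu*(R-x1)/sm, beta*(R-x1)/sm - r*CI/mu)" by simp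
        next
          assume "(S, Im, Is) = (D*x1/sm, mu*(R-x1)/sm, beta*(R-x1)/sm - r*CI/mu)"
          thus "\<exists>x. 0 < x \<and> x < R - c \<and> f x = 0 \<and> S = D*x/sm \<and> Im = mu*(R-x)/sm \<and>
            Is = beta*(R-x)/sm - r*CI/mu" using x10 x1y fx1 unfolding y_def by auto
        qed
      qed
    qed
  qed
  show ?thesis using part1 part2 unfolding R_def[symmetric] c1 by blast
qed

end
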